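(* Let $G$ be a bounded metric operator in $\mathcal H$ and $S$ a closed densely defined operator in $\mathcal H$. Define $K$ on $D(K)=G^{1/2}D(S)$ by $K\xi=G^{1/2}SG^{-1/2}\xi$. Then $K$ is densely defined and $K^*=G^{-1/2}S^*G^{1/2}$, the latter operator being defined on its natural domain $\{\eta\in\mathcal H: G^{1/2}\eta\in D(S^* ),\ S^*G^{1/2}\eta\in D(G^{-1/2})\}$.
   Context: A metric operator in $\mathcal H$ is a self-adjoint operator $G$ with $\langle G\xi,\xi\rangle>0$ for all nonzero $\xi\in D(G)$; it is injective, and $G^{-1/2}$ denotes the (possibly unbounded) inverse of $G^{1/2}$. *)

theory Defs
  imports "HOL-Analysis.Analysis"
begin

text \<open>HOL-Analysis only provides real inner product spaces, so we introduce complex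
inner product spaces as a type class (inner product linear in the first argument,
conjugate linear in the second), and complex Hilbert spaces as complete ones.\<close>

class complex_inner = real_normed_vector +
  fixes scaleC :: "complex \<Rightarrow> 'a \<Rightarrow> 'a"
  fixes cinner :: "'a \<Rightarrow> 'a \<Rightarrow> complex"
  assumes scaleC_scaleR: "scaleC (complex_of_real r) x = scaleR r x"
    and scaleC_add_right: "scaleC a (x + y) = scaleC a x + scaleC a y"
    and scaleC_add_left: "scaleC (a + b) x = scaleC a x + scaleC b x"
    and scaleC_scaleC: "scaleC a (scaleC b x) = scaleC (a * b) x"
    and scaleC_one: "scaleC 1 x = x"
    and cinner_commute: "cinner x y = cnj (cinner y x)"
    and cinner_add_left: "cinner (x + y) z = cinner x z + cinner y z"
    and cinner_scaleC_left: "cinner (scaleC a x) y = a * cinner x y"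
    and cinner_self_nonneg: "0 \<le> Re (cinner x x)"
    and cinner_eq_zero_iff: "cinner x x = 0 \<longleftrightarrow> x = 0"
    and norm_eq_sqrt_cinner: "norm x = sqrt (Re (cinner x x))"

class chilbert_space = complex_inner + complete_space

text \<open>An operator in H is represented by its graph T :: ('a \<times> 'a) set; its domain is
Domain T.  Equality of operators is equality of graphs (same domain, same values).\<close>

definition linear_op :: "('a::complex_inner \<times> 'a) set \<Rightarrow> bool" where
  "linear_op T \<longleftrightarrow>
     (0, 0) \<in> T \<and>
     (\<forall>x1 y1 x2 y2. (x1, y1) \<in> T \<longrightarrow> (x2, y2) \<in> T \<longrightarrow> (x1 + x2, y1 + y2) \<in> T) \<and>
     (\<forall>c x y. (x, y) \<in> T \<longrightarrow> (scaleC c x, scaleC c y) \<in> T) \<and>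
     (\<forall>x y z. (x, y) \<in> T \<longrightarrow> (x, z) \<in> T \<longrightarrow> y = z)"

definition densely_defined :: "('a::complex_inner \<times> 'a) set \<Rightarrow> bool" where
  "densely_defined T \<longleftrightarrow> closure (Domain T) = UNIV"

definition closed_op :: "('a::complex_inner \<times> 'a) set \<Rightarrow> bool" where
  "closed_op T \<longleftrightarrow> closed T"

definition adjoint_op :: "('a::complex_inner \<times> 'a) set \<Rightarrow> ('a \<times> 'a) set" where
  "adjoint_op T = {(y, z). \<forall>x w. (x, w) \<in> T \<longrightarrow> cinner w y = cinner x z}"

definition op_comp :: "('a \<times> 'a) set \<Rightarrow> ('a \<times> 'a) set \<Rightarrow> ('a \<times> 'a) set" where
  "op_comp A B = {(x, z). \<exists>y. (x, y) \<in> B \<and> (y, z) \<in> A}"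

definition op_inv :: "('a \<times> 'a) set \<Rightarrow> ('a \<times> 'a) set" where
  "op_inv T = converse T"

definition graph :: "('a \<Rightarrow> 'a) \<Rightarrow> ('a \<times> 'a) set" where
  "graph f = {(x, f x) | x. True}"

definition cbounded_linear :: "('a::complex_inner \<Rightarrow> 'a) \<Rightarrow> bool" where
  "cbounded_linear f \<longleftrightarrow>
     (\<forall>x y. f (x + y) = f x + f y) \<and> (\<forall>c x. f (scaleC c x) = scaleC c (f x)) \<and>
     (\<exists>K. \<forall>x. norm (f x) \<le> norm x * K)"

definition selfadjoint_bdd :: "('a::complex_inner \<Rightarrow> 'a) \<Rightarrow> bool" where
  "selfadjoint_bdd f \<longleftrightarrow> (\<forall>x y. cinner (f x) y = cinner x (f y))"

definition bounded_metric_op :: "('a::complex_inner \<Rightarrow> 'a) \<Rightarrow> bool" where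
  "bounded_metric_op g \<longleftrightarrow> cbounded_linear g \<and> selfadjoint_bdd g \<and>
     (\<forall>x. x \<noteq> 0 \<longrightarrow> Im (cinner (g x) x) = 0 \<and> 0 < Re (cinner (g x) x))"

definition op_sqrt :: "('a::complex_inner \<Rightarrow> 'a) \<Rightarrow> ('a \<Rightarrow> 'a)" where
  "op_sqrt g = (THE r. cbounded_linear r \<and> selfadjoint_bdd r \<and>
                       (\<forall>x. 0 \<le> Re (cinner (r x) x)) \<and> r \<circ> r = g)"

end

theory Submission
  imports Defs "HOL-Computational_Algebra.Formal_Power_Series"
begin



lemma cinner_zero_left[simp]: "cinner 0 y = 0"
  using cinner_add_left[of 0 0 y] by simp

lemma cinner_zero_right[simp]: "cinner x 0 = 0"
  by (metis cinner_commute cinner_zero_left complex_cnj_zero)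

lemma cinner_add_right: "cinner x (y + z) = cinner x y + cinner x z"
  by (metis cinner_commute cinner_add_left complex_cnj_add)

lemma cinner_scaleC_right: "cinner x (scaleC a y) = cnj a * cinner x y"
  by (metis cinner_commute cinner_scaleC_left complex_cnj_mult)

lemma cinner_minus_left: "cinner (- x) y = - cinner x y"
  using cinner_add_left[of x "-x" y] add.inverse_unique[of "cinner x y" "cinner (-x) y"] by simp

lemma cinner_minus_right: "cinner x (- y) = - cinner x y"
  by (metis cinner_commute cinner_minus_left complex_cnj_minus)

lemma cinner_diff_left: "cinner (x - y) z = cinner x z - cinner y z"
  using cinner_add_left[of x "-y" z] cinner_minus_left by simp

lemma cinner_diff_right: "cinner x (y - z) = cinner x y - cinner x z"
  using cinner_add_right[of x y "-z"] cinner_minus_right by simp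

lemma scaleR_as_scaleC: "scaleR r x = scaleC (complex_of_real r) x"
  by (simp add: scaleC_scaleR)

lemma cinner_scaleR_left: "cinner (scaleR r x) y = complex_of_real r * cinner x y"
  by (simp add: scaleR_as_scaleC cinner_scaleC_left)

lemma cinner_scaleR_right: "cinner x (scaleR r y) = complex_of_real r * cinner x y"
  by (simp add: scaleR_as_scaleC cinner_scaleC_right)

lemma cinner_self_Im: "Im (cinner x x) = 0"
proof -
  have "Im (cinner x x) = Im (cnj (cinner x x))" using cinner_commute[of x x] by (rule arg_cong)
  then show ?thesis by simp
qed

lemma cinner_self_real: "cinner x x = complex_of_real (Re (cinner x x))"
  using cinner_self_Im[of x] by (simp add: complex_eq_iff)

lemma norm_sq_cinner: "(norm x)^2 = Re (cinner x x)"
  by (subst norm_eq_sqrt_cinner) (simp add: cinner_self_nonneg)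

lemma cinner_self_norm: "cinner x x = complex_of_real ((norm x)^2)"
  by (simp only: norm_sq_cinner) (rule cinner_self_real)

lemma scaleC_zero_right[simp]: "scaleC a 0 = 0"
  using scaleC_add_right[of a 0 0] by simp

lemma scaleC_minus_right: "scaleC a (- x) = - scaleC a x"
  using scaleC_add_right[of a x "-x"] add.inverse_unique[of "scaleC a x" "scaleC a (-x)"] by simp

lemma scaleC_diff_right: "scaleC a (x - y) = scaleC a x - scaleC a y"
  using scaleC_add_right[of a x "-y"] scaleC_minus_right by simp

lemma norm_scaleC: "norm (scaleC a x) = cmod a * norm x"
proof -
  have "(norm (scaleC a x))^2 = Re (cinner (scaleC a x) (scaleC a x))" by (rule norm_sq_cinner)
  also have "\<dots> = Re (a * cnj a * cinner x x)"
    by (simp add: cinner_scaleC_left cinner_scaleC_right mult.assoc cinner_self_Im)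
  also have "\<dots> = (cmod a)^2 * (norm x)^2"
    by (simp add: complex_mult_cnj cinner_self_norm cmod_power2 flip: of_real_mult)
  finally have "(norm (scaleC a x))^2 = (cmod a * norm x)^2" by (simp add: power_mult_distrib)
  then show ?thesis by (simp add: power2_eq_iff_nonneg)
qed



definition posop :: "('a::complex_inner \<Rightarrow> 'a) \<Rightarrow> bool" where
  "posop T \<longleftrightarrow> (\<forall>x y. T (x + y) = T x + T y) \<and> (\<forall>c x. T (scaleC c x) = scaleC c (T x)) \<and>
     (\<forall>x y. cinner (T x) y = cinner x (T y)) \<and> (\<forall>x. 0 \<le> Re (cinner (T x) x))"

lemma posop_expand:
  assumes "posop T"
  shows "cinner (T (scaleC \<alpha> x + scaleC \<beta> y)) (scaleC \<alpha> x + scaleC \<beta> y) =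
    \<alpha> * cnj \<alpha> * cinner (T x) x + \<alpha> * cnj \<beta> * cinner (T x) y + \<beta> * cnj \<alpha> * cnj (cinner (T x) y)
    + \<beta> * cnj \<beta> * cinner (T y) y"
proof -
  have add: "\<And>x y. T (x + y) = T x + T y" and sc: "\<And>c x. T (scaleC c x) = scaleC c (T x)"
    and sa: "\<And>x y. cinner (T x) y = cinner x (T y)" using assms unfolding posop_def by auto
  have yx: "cinner (T y) x = cnj (cinner (T x) y)"
    by (metis sa cinner_commute)
  show ?thesis
    by (simp add: add sc cinner_add_left cinner_add_right cinner_scaleC_left cinner_scaleC_right yx
        algebra_simps)
qed

lemma posop_self_real:
  assumes "posop T" shows "cinner (T x) x = complex_of_real (Re (cinner (T x) x))"
proof -
  have sa: "\<And>x y. cinner (T x) y = cinner x (T y)" using assms unfolding posop_def by auto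
  have "cinner (T x) x = cnj (cinner (T x) x)" by (metis sa cinner_commute)
  then have "Im (cinner (T x) x) = 0" by (metis cnj.sel(2) neg_equal_zero)
  then show ?thesis by (simp add: complex_eq_iff)
qed

lemma posop_CS:
  assumes T: "posop T"
  shows "(cmod (cinner (T x) y))^2 \<le> Re (cinner (T x) x) * Re (cinner (T y) y)"
proof -
  define a where "a = Re (cinner (T x) x)"
  define b where "b = Re (cinner (T y) y)"
  define c where "c = cinner (T x) y"
  have pos: "\<And>u. 0 \<le> Re (cinner (T u) u)" using T unfolding posop_def by auto
  have ha: "cinner (T x) x = complex_of_real a" unfolding a_def by (rule posop_self_real[OF T])
  have hb: "cinner (T y) y = complex_of_real b" unfolding b_def by (rule posop_self_real[OF T])
  have a0: "0 \<le> a" "0 \<le> b" unfolding a_def b_def using pos by auto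
  have key: "\<And>\<alpha> \<beta>. 0 \<le> Re (\<alpha> * cnj \<alpha> * complex_of_real a + \<alpha> * cnj \<beta> * c + \<beta> * cnj \<alpha> * cnj c
    + \<beta> * cnj \<beta> * complex_of_real b)"
    using pos posop_expand[OF T] ha hb c_def by metis
  have cc: "cmod c * cmod c = Re c * Re c + Im c * Im c" by (metis cmod_power2 power2_eq_square)
  show ?thesis
  proof (cases "b > 0")
    case True
    have "0 \<le> Re (complex_of_real b * cnj (complex_of_real b) * complex_of_real a
      + complex_of_real b * cnj (- c) * c + (- c) * cnj (complex_of_real b) * cnj c
      + (- c) * cnj (- c) * complex_of_real b)" by (rule key)
    then have "0 \<le> b * (a * b - (cmod c)^2)"
      by (simp add: cc algebra_simps power2_eq_square)
    then have "(cmod c)^2 \<le> a * b" using True by (simp add: zero_le_mult_iff)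
    then show ?thesis unfolding a_def b_def c_def .
  next
    case False
    then have b0: "b = 0" using a0 by simp
    have "c = 0"
    proof (rule ccontr)
      assume "c \<noteq> 0"
      then have cpos: "0 < (cmod c)^2" by simp
      define t where "t = (a + 1) / (2 * (cmod c)^2)"
      have "0 \<le> Re (1 * cnj 1 * complex_of_real a + 1 * cnj (- complex_of_real t * c) * c
        + (- complex_of_real t * c) * cnj 1 * cnj c
        + (- complex_of_real t * c) * cnj (- complex_of_real t * c) * complex_of_real b)" by (rule key)
      then have "0 \<le> a - 2 * t * (cmod c)^2"
        by (simp add: b0 cc algebra_simps power2_eq_square)
      also have "2 * t * (cmod c)^2 = a + 1" unfolding t_def using cpos by simp
      finally show False by simp
    qed
    then show ?thesis unfolding a_def b_def c_def using a0 by (simp add: c_def b_def a_def)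
  qed
qed

lemma posop_id: "posop (\<lambda>x::'a::complex_inner. x)"
  unfolding posop_def by (simp add: cinner_self_nonneg)

lemma cinner_CS: "cmod (cinner x y) \<le> norm x * norm y"
proof -
  have "(cmod (cinner x y))^2 \<le> Re (cinner x x) * Re (cinner y y)"
    using posop_CS[OF posop_id] .
  also have "\<dots> = (norm x * norm y)^2" by (simp add: norm_sq_cinner power_mult_distrib)
  finally show ?thesis by (rule power2_le_imp_le) simp
qed


lemma bilinear_Cauchy_product_sums:
  fixes a :: "nat \<Rightarrow> 'a::banach" and b :: "nat \<Rightarrow> 'b::banach"
    and prod :: "'a \<Rightarrow> 'b \<Rightarrow> 'c::banach"
  assumes bb: "bounded_bilinear prod"
    and a: "summable (\<lambda>k. norm (a k))"
    and b: "summable (\<lambda>k. norm (b k))"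
  shows "(\<lambda>k. \<Sum>i\<le>k. prod (a i) (b (k - i))) sums (prod (\<Sum>k. a k) (\<Sum>k. b k))"
proof -
  obtain K where K0: "0 \<le> K" and Kb: "\<And>x y. norm (prod x y) \<le> norm x * norm y * K"
    using bounded_bilinear.nonneg_bounded[OF bb] by blast
  let ?S1 = "\<lambda>n::nat. {..<n} \<times> {..<n}"
  let ?S2 = "\<lambda>n::nat. {(i,j). i + j < n}"
  have S1_mono: "\<And>m n. m \<le> n \<Longrightarrow> ?S1 m \<subseteq> ?S1 n" by auto
  have S2_le_S1: "\<And>n. ?S2 n \<subseteq> ?S1 n" by auto
  have S1_le_S2: "\<And>n. ?S1 (n div 2) \<subseteq> ?S2 n" by auto
  have finite_S1: "\<And>n. finite (?S1 n)" by simp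
  with S2_le_S1 have finite_S2: "\<And>n. finite (?S2 n)" by (rule finite_subset)

  let ?g = "\<lambda>(i,j). prod (a i) (b j)"
  let ?f = "\<lambda>(i,j). norm (a i) * norm (b j) * K"
  have f_nonneg: "\<And>x. 0 \<le> ?f x" using K0 by auto
  then have norm_sum_f: "\<And>A. norm (sum ?f A) = sum ?f A"
    unfolding real_norm_def
    by (simp only: abs_of_nonneg sum_nonneg [rule_format])
  have gsum: "\<And>n. prod (\<Sum>k<n. a k) (\<Sum>k<n. b k) = sum ?g (?S1 n)"
    unfolding bounded_bilinear.sum_left[OF bb] bounded_bilinear.sum_right[OF bb]
    by (subst sum.swap) (rule sum.cartesian_product)
  have "(\<lambda>n. prod (\<Sum>k<n. a k) (\<Sum>k<n. b k)) \<longlonglongrightarrow> prod (\<Sum>k. a k) (\<Sum>k. b k)"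
    by (intro bounded_bilinear.tendsto[OF bb] summable_LIMSEQ summable_norm_cancel [OF a] summable_norm_cancel [OF b])
  then have 1: "(\<lambda>n. sum ?g (?S1 n)) \<longlonglongrightarrow> prod (\<Sum>k. a k) (\<Sum>k. b k)"
    by (simp only: gsum)
  have fsum: "\<And>n. (\<Sum>k<n. norm (a k)) * (\<Sum>k<n. norm (b k)) * K = sum ?f (?S1 n)"
    by (simp add: sum_distrib_left sum_distrib_right sum.cartesian_product[symmetric] mult.assoc)
       (rule sum.swap)
  have "(\<lambda>n. (\<Sum>k<n. norm (a k)) * (\<Sum>k<n. norm (b k)) * K) \<longlonglongrightarrow> (\<Sum>k. norm (a k)) * (\<Sum>k. norm (b k)) * K"
    using a b by (intro tendsto_mult tendsto_const summable_LIMSEQ)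
  then have "(\<lambda>n. sum ?f (?S1 n)) \<longlonglongrightarrow> (\<Sum>k. norm (a k)) * (\<Sum>k. norm (b k)) * K"
    by (simp only: fsum)
  then have "convergent (\<lambda>n. sum ?f (?S1 n))"
    by (rule convergentI)
  then have Cauchy: "Cauchy (\<lambda>n. sum ?f (?S1 n))"
    by (rule convergent_Cauchy)
  have "Zfun (\<lambda>n. sum ?f (?S1 n - ?S2 n)) sequentially"
  proof (rule ZfunI, simp only: eventually_sequentially norm_sum_f)
    fix r :: real
    assume r: "0 < r"
    from CauchyD [OF Cauchy r] obtain N
      where "\<forall>m\<ge>N. \<forall>n\<ge>N. norm (sum ?f (?S1 m) - sum ?f (?S1 n)) < r" ..
    then have "\<And>m n. N \<le> n \<Longrightarrow> n \<le> m \<Longrightarrow> norm (sum ?f (?S1 m - ?S1 n)) < r"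
      by (simp only: sum_diff finite_S1 S1_mono)
    then have N: "\<And>m n. N \<le> n \<Longrightarrow> n \<le> m \<Longrightarrow> sum ?f (?S1 m - ?S1 n) < r"
      by (simp only: norm_sum_f)
    show "\<exists>N. \<forall>n\<ge>N. sum ?f (?S1 n - ?S2 n) < r"
    proof (intro exI allI impI)
      fix n
      assume "2 * N \<le> n"
      then have n: "N \<le> n div 2" by simp
      have "sum ?f (?S1 n - ?S2 n) \<le> sum ?f (?S1 n - ?S1 (n div 2))"
        by (intro sum_mono2 finite_Diff finite_S1 f_nonneg Diff_mono subset_refl S1_le_S2)
      also have "\<dots> < r"
        using n div_le_dividend by (rule N)
      finally show "sum ?f (?S1 n - ?S2 n) < r" .
    qed
  qed
  then have "Zfun (\<lambda>n. sum ?g (?S1 n - ?S2 n)) sequentially"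
    apply (rule Zfun_le [rule_format])
    apply (simp only: norm_sum_f)
    apply (rule order_trans [OF norm_sum sum_mono])
    apply (auto simp add: Kb)
    done
  then have 2: "(\<lambda>n. sum ?g (?S1 n) - sum ?g (?S2 n)) \<longlonglongrightarrow> 0"
    unfolding tendsto_Zfun_iff diff_0_right
    by (simp only: sum_diff finite_S1 S2_le_S1)
  with 1 have "(\<lambda>n. sum ?g (?S2 n)) \<longlonglongrightarrow> prod (\<Sum>k. a k) (\<Sum>k. b k)"
    by (rule Lim_transform2)
  then show ?thesis
    by (simp only: sums_def sum.triangle_reindex)
qed


definition csq :: "nat \<Rightarrow> real" where
  "csq n = (-1)^n * ((1/2::real) gchoose n)"

lemma csq_0[simp]: "csq 0 = 1" by (simp add: csq_def)

lemma csq_partial_nonneg: "0 \<le> (\<Sum>k\<le>m. csq k)"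
proof -
  have "(\<Sum>k\<le>m. csq k) = (\<Sum>k\<le>m. ((1/2::real) gchoose k) * (- 1) ^ k)"
    by (simp add: csq_def mult.commute)
  also have "\<dots> = (- 1) ^ m * ((1/2 - 1::real) gchoose m)" by (rule gbinomial_sum_lower_neg)
  also have "((1/2 - 1::real) gchoose m) = (-1)^m * ((of_nat m - (1/2 - 1) - 1) gchoose m)"
    by (rule gbinomial_negated_upper)
  also have "(- 1) ^ m * ((-1)^m * ((of_nat m - (1/2 - 1) - 1) gchoose m)) = ((real m - 1/2) gchoose m)"
    by (simp flip: mult.assoc power_mult_distrib)
  also have "\<dots> \<ge> 0"
    unfolding gbinomial_prod_rev
    by (intro divide_nonneg_nonneg prod_nonneg) auto
  finally show ?thesis .
qed

lemma csq_nonpos: "n \<ge> 1 \<Longrightarrow> csq n \<le> 0"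
proof -
  have "\<And>n. (-1::real)^(Suc n) * (\<Prod>i=0..<Suc n. 1/2 - real i) \<le> 0"
  proof -
    fix n show "(-1::real)^(Suc n) * (\<Prod>i=0..<Suc n. 1/2 - real i) \<le> 0"
    proof (induction n)
      case 0 then show ?case by simp
    next
      case (Suc n)
      have "(-1::real)^(Suc (Suc n)) * (\<Prod>i=0..<Suc (Suc n). 1/2 - real i)
         = ((-1::real)^(Suc n) * (\<Prod>i=0..<Suc n. 1/2 - real i)) * (real (Suc n) - 1/2)"
      proof -
        have hp: "(\<Prod>i=0..<Suc (Suc n). 1/2 - real i) = (\<Prod>i=0..<Suc n. 1/2 - real i) * (1/2 - real (Suc n))"
          by (rule prod.atLeast0_lessThan_Suc)
        have gen: "\<And>q p h s::real. (-1) * q * (p * (h - s)) = (q * p) * (s - h)" by (simp add: algebra_simps)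
        show ?thesis by (simp only: hp power_Suc[of "-1::real" "Suc n"] gen)
      qed
      also have "\<dots> \<le> 0" by (rule mult_nonpos_nonneg[OF Suc.IH]) simp
      finally show ?case .
    qed
  qed
  moreover assume "n \<ge> 1"
  then obtain m where "n = Suc m" by (cases n) auto
  ultimately show "csq n \<le> 0"
    unfolding csq_def gbinomial_prod_rev
    by (metis (no_types) divide_nonpos_nonneg fact_ge_zero of_nat_0_le_iff real_divide_square_eq times_divide_eq_right)
qed

lemma csq_abs_partial: "(\<Sum>k\<le>m. \<bar>csq k\<bar>) \<le> 2"
proof -
  have "(\<Sum>k\<le>m. \<bar>csq k\<bar>) = (\<Sum>k\<le>m. (if k = 0 then 2 else 0) - csq k)"
  proof (rule sum.cong)
    fix k assume "k \<in> {..m}"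
    show "\<bar>csq k\<bar> = (if k = 0 then 2 else 0) - csq k"
      using csq_nonpos[of k] by (cases "k = 0") auto
  qed simp
  also have "\<dots> = 2 - (\<Sum>k\<le>m. csq k)"
    by (simp add: sum_subtractf)
  also have "\<dots> \<le> 2" using csq_partial_nonneg[of m] by simp
  finally show ?thesis .
qed

lemma csq_abs_summable: "summable (\<lambda>k. \<bar>csq k\<bar>)"
  by (rule bounded_imp_summable[of _ 2]) (auto intro: csq_abs_partial)

lemma csq_summable: "summable csq"
  using csq_abs_summable summable_rabs_cancel by blast

lemma csq_suminf_nonneg: "0 \<le> suminf csq"
proof -
  have "(\<lambda>n. \<Sum>k<n. csq k) \<longlonglongrightarrow> suminf csq" using csq_summable summable_LIMSEQ by blast
  moreover have "\<And>n. 0 \<le> (\<Sum>k<n. csq k)"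
  proof -
    fix n show "0 \<le> (\<Sum>k<n. csq k)"
      by (cases n) (simp_all add: lessThan_Suc_atMost csq_partial_nonneg)
  qed
  ultimately show ?thesis by (simp add: LIMSEQ_le_const)
qed

lemma csq_cauchy: "(\<Sum>i\<le>k. csq i * csq (k - i)) = (if k = 0 then 1 else if k = 1 then -1 else 0)"
proof -
  have "(\<Sum>i\<le>k. csq i * csq (k - i)) = (-1)^k * (\<Sum>i\<in>{0..k}. ((1/2::real) gchoose i) * ((1/2::real) gchoose (k - i)))"
    unfolding csq_def sum_distrib_left atMost_atLeast0
  proof (rule sum.cong)
    fix i assume "i \<in> {0..k}"
    then have "(-1::real)^i * (-1)^(k-i) = (-1)^k" by (simp flip: power_add)
    then show "(- 1) ^ i * ((1 / 2::real) gchoose i) * ((- 1) ^ (k - i) * ((1 / 2::real) gchoose (k - i))) =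
         (- 1) ^ k * (((1 / 2::real) gchoose i) * ((1 / 2::real) gchoose (k - i)))"
      by (metis (no_types, lifting) mult.assoc mult.left_commute)
  qed simp
  also have "\<dots> = (-1)^k * ((1/2 + 1/2::real) gchoose k)" by (simp only: gbinomial_Vandermonde)
  also have "((1/2 + 1/2::real) gchoose k) = of_nat (1 choose k)" by (simp add: binomial_gbinomial)
  finally show ?thesis
    by (cases k) (auto simp: binomial_eq_0)
qed


lemma cbounded_imp_bounded_linear:
  assumes "cbounded_linear f" shows "bounded_linear f"
proof -
  from assms obtain K where add: "\<And>x y. f (x + y) = f x + f y" and sc: "\<And>c x. f (scaleC c x) = scaleC c (f x)"
    and K: "\<And>x. norm (f x) \<le> norm x * K" unfolding cbounded_linear_def by blast
  show ?thesis
    by (rule bounded_linear_intro[of f K]) (auto simp: add scaleR_as_scaleC sc K)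
qed

lemma bl_cinner_left: "bounded_linear (\<lambda>x. cinner x y)"
  by (rule bounded_linear_intro[of _ "norm y"])
     (auto simp: cinner_add_left cinner_scaleR_left scaleR_conv_of_real cinner_CS)

lemma bl_scaleC: "bounded_linear (scaleC c :: 'a::complex_inner \<Rightarrow> 'a)"
  by (rule bounded_linear_intro[of _ "cmod c"])
     (auto simp: scaleC_add_right scaleR_as_scaleC scaleC_scaleC norm_scaleC mult.commute)

lemma Re_cinner_swap: "Re (cinner y x) = Re (cinner x y)"
  by (subst cinner_commute) simp

lemma norm_diff_sq: "(norm (x - y))^2 = (norm x)^2 - 2 * Re (cinner x y) + (norm y)^2"
  unfolding norm_sq_cinner
  by (simp add: cinner_diff_left cinner_diff_right Re_cinner_swap[of y x])

lemma norm_add_sq: "(norm (x + y))^2 = (norm x)^2 + 2 * Re (cinner x y) + (norm y)^2"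
  unfolding norm_sq_cinner
  by (simp add: cinner_add_left cinner_add_right Re_cinner_swap[of y x])

lemma Re_cinner_le: "Re (cinner x y) \<le> norm x * norm y"
  using cinner_CS[of x y] complex_Re_le_cmod[of "cinner x y"] by linarith

lemma posop_bound:
  assumes T: "posop T" and M: "0 \<le> M" and bd: "\<And>x. norm (T x) \<le> M * norm x"
  shows "(norm (T x))^2 \<le> M * Re (cinner (T x) x)"
proof -
  define v where "v = T x"
  have pos: "\<And>u. 0 \<le> Re (cinner (T u) u)" using T unfolding posop_def by auto
  have cs: "(cmod (cinner (T x) v))^2 \<le> Re (cinner (T x) x) * Re (cinner (T v) v)"
    by (rule posop_CS[OF T])
  have "cmod (cinner (T x) v) = (norm v)^2" unfolding v_def cinner_self_norm by (simp add: norm_power)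
  moreover have "Re (cinner (T v) v) \<le> M * (norm v)^2"
  proof -
    have "Re (cinner (T v) v) \<le> norm (T v) * norm v" by (rule Re_cinner_le)
    also have "\<dots> \<le> M * norm v * norm v" using bd[of v] by (simp add: mult_right_mono)
    finally show ?thesis by (simp add: power2_eq_square mult.assoc)
  qed
  ultimately have "(norm v)^2 * (norm v)^2 \<le> Re (cinner (T x) x) * (M * (norm v)^2)"
    using cs pos[of x] by (metis mult_left_mono order_trans power2_eq_square)
  then have "(norm v)^2 * (norm v)^2 \<le> (M * Re (cinner (T x) x)) * (norm v)^2"
    by (simp add: algebra_simps)
  then have "(norm v)^2 \<le> M * Re (cinner (T x) x)"
    using M pos[of x] mult_right_le_imp_le[of "(norm v)^2" "(norm v)^2" "M * Re (cinner (T x) x)"]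
    by (cases "norm v = 0") auto
  then show ?thesis unfolding v_def .
qed


instance chilbert_space \<subseteq> banach ..

definition Bop :: "('a::complex_inner \<Rightarrow> 'a) \<Rightarrow> 'a \<Rightarrow> 'a" where
  "Bop A x = x - A x"

locale sqc =
  fixes A :: "'a::chilbert_space \<Rightarrow> 'a"
  assumes posA: "posop A" and bdA: "\<And>x. norm (A x) \<le> norm x"
begin

lemma A_add: "A (x + y) = A x + A y" using posA unfolding posop_def by blast
lemma A_sc: "A (scaleC c x) = scaleC c (A x)" using posA unfolding posop_def by blast
lemma A_sa: "cinner (A x) y = cinner x (A y)" using posA unfolding posop_def by blast
lemma A_pos: "0 \<le> Re (cinner (A x) x)" using posA unfolding posop_def by blast

abbreviation "B \<equiv> Bop A"

lemma B_add: "B (x + y) = B x + B y" by (simp add: Bop_def A_add algebra_simps)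
lemma B_sc: "B (scaleC c x) = scaleC c (B x)" by (simp add: Bop_def A_sc scaleC_diff_right)
lemma B_sa: "cinner (B x) y = cinner x (B y)"
  by (simp add: Bop_def cinner_diff_left cinner_diff_right A_sa)

lemma B_norm: "norm (B x) \<le> norm x"
proof -
  have a1: "(norm (A x))^2 \<le> 1 * Re (cinner (A x) x)"
    by (rule posop_bound[OF posA]) (auto simp: bdA)
  have "(norm (B x))^2 = (norm x)^2 - 2 * Re (cinner x (A x)) + (norm (A x))^2"
    unfolding Bop_def by (rule norm_diff_sq)
  also have "Re (cinner x (A x)) = Re (cinner (A x) x)" by (rule Re_cinner_swap)
  finally have "(norm (B x))^2 \<le> (norm x)^2" using a1 A_pos[of x] by linarith
  then show ?thesis by (rule power2_le_imp_le) simp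
qed

lemma Bn_add: "(B ^^ n) (x + y) = (B ^^ n) x + (B ^^ n) y"
  by (induction n) (auto simp: B_add)
lemma Bn_sc: "(B ^^ n) (scaleC c x) = scaleC c ((B ^^ n) x)"
  by (induction n) (auto simp: B_sc)
lemma Bn_scR: "(B ^^ n) (scaleR r x) = scaleR r ((B ^^ n) x)"
  by (simp add: scaleR_as_scaleC Bn_sc)
lemma Bn_sa: "cinner ((B ^^ n) x) y = cinner x ((B ^^ n) y)"
  by (induction n arbitrary: x y) (auto simp: B_sa funpow_swap1)
lemma Bn_norm: "norm ((B ^^ n) x) \<le> norm x"
  by (induction n) (auto intro: order_trans[OF B_norm])

lemma bl_Bn: "bounded_linear (B ^^ n)"
  by (rule bounded_linear_intro[of _ 1]) (auto simp: Bn_add Bn_scR Bn_norm)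

definition Bp :: "nat \<Rightarrow> 'a \<Rightarrow>\<^sub>L 'a" where "Bp n = Blinfun (B ^^ n)"

lemma Bp_apply: "blinfun_apply (Bp n) = B ^^ n"
  unfolding Bp_def by (rule bounded_linear_Blinfun_apply[OF bl_Bn])

lemma Bp_norm: "norm (Bp n) \<le> 1"
  by (rule norm_blinfun_bound) (auto simp: Bp_apply Bn_norm)

definition aa :: "nat \<Rightarrow> 'a \<Rightarrow>\<^sub>L 'a" where "aa n = csq n *\<^sub>R Bp n"

lemma aa_norm: "norm (aa n) \<le> \<bar>csq n\<bar>"
  unfolding aa_def using Bp_norm[of n] by (simp add: mult_left_le)

lemma aa_summable: "summable (\<lambda>n. norm (aa n))"
  by (rule summable_comparison_test[OF _ csq_abs_summable]) (auto intro: aa_norm)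

definition R0l :: "'a \<Rightarrow>\<^sub>L 'a" where "R0l = suminf aa"

definition R0 :: "'a \<Rightarrow> 'a" where "R0 = blinfun_apply R0l"

lemma bsum_norm: "summable (\<lambda>n. norm (csq n *\<^sub>R (B ^^ n) x))"
proof (rule summable_comparison_test[of _ "\<lambda>n. \<bar>csq n\<bar> * norm x"])
  show "summable (\<lambda>n. \<bar>csq n\<bar> * norm x)" by (intro summable_mult2 csq_abs_summable)
  show "\<exists>N. \<forall>n\<ge>N. norm (norm (csq n *\<^sub>R (B ^^ n) x)) \<le> \<bar>csq n\<bar> * norm x"
  proof (intro exI allI impI)
    fix n :: nat
    have "norm (csq n *\<^sub>R (B ^^ n) x) = \<bar>csq n\<bar> * norm ((B ^^ n) x)" by simp
    also have "\<dots> \<le> \<bar>csq n\<bar> * norm x" by (rule mult_left_mono[OF Bn_norm]) simp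
    finally show "norm (norm (csq n *\<^sub>R (B ^^ n) x)) \<le> \<bar>csq n\<bar> * norm x" by simp
  qed
qed

lemma bsum_summable: "summable (\<lambda>n. csq n *\<^sub>R (B ^^ n) x)"
  by (rule summable_norm_cancel[OF bsum_norm])

lemma R0_sums: "(\<lambda>n. csq n *\<^sub>R (B ^^ n) x) sums R0 x"
proof -
  have "summable aa" by (rule summable_norm_cancel[OF aa_summable])
  then have "aa sums R0l" unfolding R0l_def by (rule summable_sums)
  then have "(\<lambda>n. blinfun_apply (aa n) x) sums blinfun_apply R0l x"
    by (rule bounded_linear.sums[OF blinfun.bounded_linear_left])
  then show ?thesis unfolding R0_def aa_def by (simp only: blinfun.scaleR_left Bp_apply)
qed

lemma R0_add: "R0 (x + y) = R0 x + R0 y" unfolding R0_def by (simp add: blinfun.add_right)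
lemma R0_scR: "R0 (scaleR r x) = scaleR r (R0 x)" unfolding R0_def by (simp add: blinfun.scaleR_right)
lemma R0_diff: "R0 (x - y) = R0 x - R0 y" unfolding R0_def by (simp add: blinfun.diff_right)

lemma R0_bound: "norm (R0 x) \<le> norm x * norm R0l"
  using norm_blinfun[of R0l x] by (simp add: R0_def mult.commute)

lemma R0_sc: "R0 (scaleC c x) = scaleC c (R0 x)"
proof -
  have "(\<lambda>n. scaleC c (csq n *\<^sub>R (B ^^ n) x)) sums scaleC c (R0 x)"
    by (rule bounded_linear.sums[OF bl_scaleC R0_sums])
  moreover have "(\<lambda>n. scaleC c (csq n *\<^sub>R (B ^^ n) x)) = (\<lambda>n. csq n *\<^sub>R (B ^^ n) (scaleC c x))"
    by (simp add: Bn_sc scaleR_as_scaleC scaleC_scaleC mult.commute)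
  ultimately have "(\<lambda>n. csq n *\<^sub>R (B ^^ n) (scaleC c x)) sums scaleC c (R0 x)" by simp
  then show ?thesis by (rule sums_unique2[OF R0_sums])
qed

lemma R0_cinner_sums: "(\<lambda>n. complex_of_real (csq n) * cinner ((B ^^ n) x) y) sums cinner (R0 x) y"
proof -
  have "(\<lambda>n. cinner (csq n *\<^sub>R (B ^^ n) x) y) sums cinner (R0 x) y"
    by (rule bounded_linear.sums[OF bl_cinner_left R0_sums])
  then show ?thesis by (simp add: cinner_scaleR_left)
qed

lemma R0_sa: "cinner (R0 x) y = cinner x (R0 y)"
proof -
  have "(\<lambda>n. cnj (complex_of_real (csq n) * cinner ((B ^^ n) y) x)) sums cnj (cinner (R0 y) x)"
    using R0_cinner_sums[of y x] by (simp only: sums_cnj)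
  moreover have "(\<lambda>n. cnj (complex_of_real (csq n) * cinner ((B ^^ n) y) x))
      = (\<lambda>n. complex_of_real (csq n) * cinner ((B ^^ n) x) y)"
    by (rule ext) (simp add: Bn_sa cinner_commute[of x "(B ^^ _) y"])
  ultimately have "(\<lambda>n. complex_of_real (csq n) * cinner ((B ^^ n) x) y) sums cinner x (R0 y)"
    by (simp add: cinner_commute[of x "R0 y"])
  then show ?thesis by (rule sums_unique2[OF R0_cinner_sums])
qed

lemma R0_pos: "0 \<le> Re (cinner (R0 x) x)"
proof -
  have s1: "(\<lambda>n. csq n * Re (cinner ((B ^^ n) x) x)) sums Re (cinner (R0 x) x)"
    using sums_Re[OF R0_cinner_sums[of x x]] by simp
  have s2: "(\<lambda>n. csq n * (norm x)^2) sums (suminf csq * (norm x)^2)"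
    by (rule sums_mult2[OF summable_sums[OF csq_summable]])
  have le: "csq n * (norm x)^2 \<le> csq n * Re (cinner ((B ^^ n) x) x)" for n
  proof (cases "n = 0")
    case True then show ?thesis by (simp add: norm_sq_cinner)
  next
    case False
    then have c: "csq n \<le> 0" using csq_nonpos by simp
    have "Re (cinner ((B ^^ n) x) x) \<le> norm ((B ^^ n) x) * norm x" by (rule Re_cinner_le)
    also have "\<dots> \<le> norm x * norm x" using Bn_norm by (simp add: mult_right_mono)
    finally show ?thesis using c by (simp add: mult_left_mono_neg power2_eq_square)
  qed
  have "suminf csq * (norm x)^2 \<le> Re (cinner (R0 x) x)"
    using sums_le[OF le s2 s1] .
  moreover have "0 \<le> suminf csq * (norm x)^2" using csq_suminf_nonneg by simp
  ultimately show ?thesis by linarith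
qed

lemma R0_sq: "R0 (R0 x) = A x"
proof -
  let ?b = "\<lambda>n. csq n *\<^sub>R (B ^^ n) x"
  have "(\<lambda>k. \<Sum>i\<le>k. blinfun_apply (aa i) (?b (k - i))) sums blinfun_apply (\<Sum>k. aa k) (\<Sum>k. ?b k)"
    by (rule bilinear_Cauchy_product_sums[OF bounded_bilinear_blinfun_apply aa_summable bsum_norm])
  moreover have "blinfun_apply (\<Sum>k. aa k) (\<Sum>k. ?b k) = R0 (R0 x)"
  proof -
    have "(\<Sum>k. ?b k) = R0 x" by (rule sums_unique[OF R0_sums, symmetric])
    then show ?thesis by (simp add: R0_def R0l_def)
  qed
  moreover have "(\<lambda>k. \<Sum>i\<le>k. blinfun_apply (aa i) (?b (k - i))) =
      (\<lambda>k. (if k = 0 then x else 0) + (if k = 1 then - B x else 0))"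
  proof (rule ext)
    fix k
    have "(\<Sum>i\<le>k. blinfun_apply (aa i) (?b (k - i))) = (\<Sum>i\<le>k. (csq i * csq (k - i)) *\<^sub>R (B ^^ k) x)"
    proof (rule sum.cong)
      fix i assume "i \<in> {..k}"
      then have "(B ^^ i) ((B ^^ (k - i)) x) = (B ^^ k) x"
        by (metis atMost_iff funpow_add le_add_diff_inverse o_apply)
      then show "blinfun_apply (aa i) (?b (k - i)) = (csq i * csq (k - i)) *\<^sub>R (B ^^ k) x"
        unfolding aa_def blinfun.scaleR_left Bp_apply by (simp add: Bn_scR)
    qed simp
    also have "\<dots> = (\<Sum>i\<le>k. csq i * csq (k - i)) *\<^sub>R (B ^^ k) x" by (simp add: scaleR_sum_left)
    also have "\<dots> = (if k = 0 then x else 0) + (if k = 1 then - B x else 0)"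
      by (simp add: csq_cauchy)
    finally show "(\<Sum>i\<le>k. blinfun_apply (aa i) (?b (k - i))) = (if k = 0 then x else 0) + (if k = 1 then - B x else 0)" .
  qed
  moreover have "(\<lambda>k. (if k = 0 then x else 0) + (if k = 1 then - B x else 0)) sums (x + - B x)"
  proof (rule sums_add)
    show "(\<lambda>n. if n = 0 then x else 0) sums x" using sums_single[of 0 "\<lambda>_. x"] by simp
    show "(\<lambda>n. if n = 1 then - B x else 0) sums (- B x)" using sums_single[of 1 "\<lambda>_. - B x"] by simp
  qed
  ultimately have "(\<lambda>k. (if k = 0 then x else 0) + (if k = 1 then - B x else 0)) sums R0 (R0 x)"
    and "(\<lambda>k. (if k = 0 then x else 0) + (if k = 1 then - B x else 0)) sums (x + - B x)"
    by simp_all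
  then have "R0 (R0 x) = x + - B x" by (rule sums_unique2)
  then show ?thesis by (simp add: Bop_def)
qed

lemma R0_comm:
  assumes S: "bounded_linear S" and SA: "\<And>x. S (A x) = A (S x)"
  shows "S (R0 x) = R0 (S x)"
proof -
  have SB: "S (B y) = B (S y)" for y by (simp add: Bop_def linear_diff[OF bounded_linear.linear[OF S]] SA)
  have SBn: "S ((B ^^ n) y) = (B ^^ n) (S y)" for n y by (induction n) (auto simp: SB)
  have "(\<lambda>n. S (csq n *\<^sub>R (B ^^ n) x)) sums S (R0 x)"
    by (rule bounded_linear.sums[OF S R0_sums])
  then have "(\<lambda>n. csq n *\<^sub>R (B ^^ n) (S x)) sums S (R0 x)"
    by (simp add: linear_cmul[OF bounded_linear.linear[OF S]] SBn)
  then show ?thesis by (rule sums_unique2[OF _ R0_sums])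
qed

end


definition sqrt_prop :: "('a::complex_inner \<Rightarrow> 'a) \<Rightarrow> ('a \<Rightarrow> 'a) \<Rightarrow> bool" where
  "sqrt_prop T r \<longleftrightarrow> cbounded_linear r \<and> selfadjoint_bdd r \<and>
                       (\<forall>x. 0 \<le> Re (cinner (r x) x)) \<and> r \<circ> r = T"

lemma sqrt_prop_posop: "sqrt_prop T r \<Longrightarrow> posop r"
  unfolding sqrt_prop_def posop_def cbounded_linear_def selfadjoint_bdd_def by blast

lemma cbounded_bound:
  fixes f :: "'a::complex_inner \<Rightarrow> 'a"
  assumes "cbounded_linear f" shows "\<exists>M\<ge>0. \<forall>x. norm (f x) \<le> M * norm x"
proof -
  note assms
  then obtain K where K: "\<And>x. norm (f x) \<le> norm x * K" unfolding cbounded_linear_def by blast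
  have "\<forall>x. norm (f x) \<le> max K 0 * norm x"
  proof
    fix x :: 'a
    have "norm x * K \<le> norm x * max K 0" by (rule mult_left_mono) auto
    then show "norm (f x) \<le> max K 0 * norm x" using K[of x] by (simp add: mult.commute)
  qed
  then show ?thesis by (intro exI[of _ "max K 0"]) auto
qed

lemma sqrt_unique_comm:
  assumes R: "sqrt_prop T R" and r: "sqrt_prop T r" and comm: "\<And>x. r (R x) = R (r x)"
  shows "r = R"
proof
  fix x
  have pR: "posop R" and pr: "posop r" using R r by (auto intro: sqrt_prop_posop)
  have lR: "linear R" and lr: "linear r"
    using R r unfolding sqrt_prop_def by (auto intro: bounded_linear.linear cbounded_imp_bounded_linear)
  obtain M1 where M1: "0 \<le> M1" "\<And>x. norm (R x) \<le> M1 * norm x"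
    using R unfolding sqrt_prop_def by (metis cbounded_bound)
  obtain M2 where M2: "0 \<le> M2" "\<And>x. norm (r x) \<le> M2 * norm x"
    using r unfolding sqrt_prop_def by (metis cbounded_bound)
  have TR: "R (R y) = T y" and Tr: "r (r y) = T y" for y
    using R r unfolding sqrt_prop_def by (auto simp: fun_eq_iff)
  have saR: "cinner (R a) b = cinner a (R b)" and sar: "cinner (r a) b = cinner a (r b)" for a b
    using R r unfolding sqrt_prop_def selfadjoint_bdd_def by auto
  have posR: "0 \<le> Re (cinner (R a) a)" and posr: "0 \<le> Re (cinner (r a) a)" for a
    using R r unfolding sqrt_prop_def by auto
  define v where "v = R x - r x"
  have "R v + r v = (R (R x) - R (r x)) + (r (R x) - r (r x))"
    unfolding v_def by (simp add: linear_diff[OF lR] linear_diff[OF lr])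
  also have "\<dots> = 0" by (simp add: TR Tr comm)
  finally have sum0: "R v + r v = 0" .
  have "Re (cinner (R v) v) + Re (cinner (r v) v) = Re (cinner (R v + r v) v)"
    by (simp add: cinner_add_left)
  also have "\<dots> = 0" by (simp add: sum0)
  finally have e1: "Re (cinner (R v) v) = 0" and e2: "Re (cinner (r v) v) = 0"
    using posR[of v] posr[of v] by linarith+
  have "(norm (R v))^2 \<le> M1 * Re (cinner (R v) v)" by (rule posop_bound[OF pR M1])
  then have Rv: "R v = 0" using e1 by simp
  have "(norm (r v))^2 \<le> M2 * Re (cinner (r v) v)" by (rule posop_bound[OF pr M2])
  then have rv: "r v = 0" using e2 by simp
  have "(norm v)^2 = Re (cinner (R x - r x) v)" unfolding norm_sq_cinner v_def ..
  also have "\<dots> = Re (cinner x (R v) - cinner x (r v))" by (simp add: cinner_diff_left saR sar)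
  also have "\<dots> = 0" by (simp add: Rv rv)
  finally have "v = 0" by simp
  then show "r x = R x" unfolding v_def by simp
qed

lemma sqrt_exists_unique:
  fixes T :: "'a::chilbert_space \<Rightarrow> 'a"
  assumes pT: "posop T" and bT: "cbounded_linear T"
  shows "sqrt_prop T (op_sqrt T)"
proof -
  obtain K where K0: "0 \<le> K" and K: "\<And>x. norm (T x) \<le> K * norm x" using cbounded_bound[OF bT] by blast
  define s where "s = K + 1"
  have s0: "0 < s" unfolding s_def using K0 by simp
  define A where "A = (\<lambda>x. (1/s) *\<^sub>R T x)"
  have Tadd: "T (x + y) = T x + T y" and Tsc: "T (scaleC c x) = scaleC c (T x)"
    and Tsa: "cinner (T x) y = cinner x (T y)" and Tpos: "0 \<le> Re (cinner (T x) x)" for x y c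
    using pT unfolding posop_def by auto
  have pA: "posop A"
    unfolding posop_def A_def
  proof (intro conjI allI)
    fix x y c
    show "(1 / s) *\<^sub>R T (x + y) = (1 / s) *\<^sub>R T x + (1 / s) *\<^sub>R T y" by (simp add: Tadd scaleR_add_right)
    show "(1 / s) *\<^sub>R T (scaleC c x) = scaleC c ((1 / s) *\<^sub>R T x)"
      by (simp add: Tsc scaleR_as_scaleC scaleC_scaleC mult.commute)
    show "cinner ((1 / s) *\<^sub>R T x) y = cinner x ((1 / s) *\<^sub>R T y)"
      by (simp add: cinner_scaleR_left cinner_scaleR_right Tsa)
    show "0 \<le> Re (cinner ((1 / s) *\<^sub>R T x) x)"
      using Tpos[of x] s0 by (simp add: cinner_scaleR_left)
  qed
  have bA: "norm (A x) \<le> norm x" for x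
  proof -
    have "norm (A x) = norm (T x) / s" unfolding A_def using s0 by simp
    also have "\<dots> \<le> (K * norm x) / s" using K[of x] s0 by (simp add: divide_right_mono)
    also have "\<dots> \<le> norm x" using s0 K0 by (simp add: s_def field_simps mult_right_mono)
    finally show ?thesis .
  qed
  interpret sqc A using pA bA by unfold_locales auto
  define R where "R = (\<lambda>x. sqrt s *\<^sub>R R0 x)"
  have SR: "sqrt_prop T R"
    unfolding sqrt_prop_def
  proof (intro conjI)
    show "cbounded_linear R"
      unfolding cbounded_linear_def R_def
    proof (intro conjI allI exI)
      fix x y c
      show "sqrt s *\<^sub>R R0 (x + y) = sqrt s *\<^sub>R R0 x + sqrt s *\<^sub>R R0 y" by (simp add: R0_add scaleR_add_right)
      show "sqrt s *\<^sub>R R0 (scaleC c x) = scaleC c (sqrt s *\<^sub>R R0 x)"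
        by (simp add: R0_sc scaleR_as_scaleC scaleC_scaleC mult.commute)
      show "norm (sqrt s *\<^sub>R R0 x) \<le> norm x * (norm R0l * sqrt s)"
        using R0_bound[of x] s0 by (simp add: mult.assoc mult.commute mult_left_mono)
    qed
    show "selfadjoint_bdd R"
      unfolding selfadjoint_bdd_def R_def by (simp add: cinner_scaleR_left cinner_scaleR_right R0_sa)
    show "\<forall>x. 0 \<le> Re (cinner (R x) x)"
      unfolding R_def using R0_pos s0 by (simp add: cinner_scaleR_left)
    show "R \<circ> R = T"
    proof
      fix x
      have "(R \<circ> R) x = (sqrt s * sqrt s) *\<^sub>R R0 (R0 x)" unfolding R_def by (simp add: R0_scR)
      also have "\<dots> = s *\<^sub>R A x" using s0 by (simp add: R0_sq)
      also have "\<dots> = T x" unfolding A_def using s0 by simp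
      finally show "(R \<circ> R) x = T x" .
    qed
  qed
  have uniq: "r = R" if r: "sqrt_prop T r" for r
  proof (rule sqrt_unique_comm[OF SR r])
    fix x
    have blr: "bounded_linear r" using r unfolding sqrt_prop_def by (auto intro: cbounded_imp_bounded_linear)
    from r have rr: "r \<circ> r = T" unfolding sqrt_prop_def by (rule conjunct2[OF conjunct2[OF conjunct2]])
    have rT: "r (T y) = T (r y)" for y
      by (simp add: rr[symmetric])
    have rA: "r (A y) = A (r y)" for y
      unfolding A_def by (simp add: linear_cmul[OF bounded_linear.linear[OF blr]] rT)
    show "r (R x) = R (r x)"
      unfolding R_def by (simp add: linear_cmul[OF bounded_linear.linear[OF blr]] R0_comm[OF blr rA])
  qed
  have "op_sqrt T = R"
    unfolding op_sqrt_def
  proof (rule the_equality)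
    show "cbounded_linear R \<and> selfadjoint_bdd R \<and> (\<forall>x. 0 \<le> Re (cinner (R x) x)) \<and> R \<circ> R = T"
      using SR unfolding sqrt_prop_def .
  next
    fix r assume h: "cbounded_linear r \<and> selfadjoint_bdd r \<and> (\<forall>x. 0 \<le> Re (cinner (r x) x)) \<and> r \<circ> r = T"
    have "sqrt_prop T r" unfolding sqrt_prop_def by (rule h)
    then show "r = R" by (rule uniq)
  qed
  then show ?thesis using SR by simp
qed


lemma parallelogram_mid:
  fixes v a b :: "'a::complex_inner"
  shows "(norm (a - b))^2 = 2 * (norm (v - a))^2 + 2 * (norm (v - b))^2 - 4 * (norm (v - (1/2) *\<^sub>R (a + b)))^2"
proof -
  define p where "p = v - a"
  define q where "q = v - b"
  have e1: "a - b = q - p" unfolding p_def q_def by simp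
  have hv: "(1/2::real) *\<^sub>R v + (1/2) *\<^sub>R v = v" by (simp flip: scaleR_add_left)
  have e2: "v - (1/2) *\<^sub>R (a + b) = (1/2) *\<^sub>R (p + q)" unfolding p_def q_def
    by (simp add: algebra_simps hv)
  have "(norm ((1/2::real) *\<^sub>R (p + q)))^2 = (1/4) * (norm (p + q))^2"
    by (simp add: power_mult_distrib power2_eq_square)
  moreover have "(norm (q - p))^2 = (norm q)^2 - 2 * Re (cinner q p) + (norm p)^2" by (rule norm_diff_sq)
  moreover have "(norm (p + q))^2 = (norm p)^2 + 2 * Re (cinner p q) + (norm q)^2" by (rule norm_add_sq)
  moreover have "Re (cinner q p) = Re (cinner p q)" by (rule Re_cinner_swap)
  ultimately show ?thesis unfolding e1 e2 p_def[symmetric] q_def[symmetric] by simp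
qed

lemma aux_lin: "(x1::real) = 2*a1 + 2*b1 - 4*c1 \<Longrightarrow> a1 \<le> p1 \<Longrightarrow> b1 \<le> p1 \<Longrightarrow> d1 \<le> c1 \<Longrightarrow> x1 \<le> 4*(p1 - d1)"
  by (simp add: algebra_simps)

lemma infdist_approx:
  assumes "M \<noteq> {}" "0 < e"
  shows "\<exists>m\<in>M. dist v m < infdist v M + e"
proof (rule ccontr)
  assume "\<not> ?thesis"
  then have "\<forall>m\<in>M. infdist v M + e \<le> dist v m" by (auto simp: not_less)
  then have "infdist v M + e \<le> infdist v M"
    unfolding infdist_notempty[OF assms(1)] by (intro cINF_greatest assms(1)) auto
  then show False using assms(2) by simp
qed

lemma closest_point:
  fixes M :: "'a::chilbert_space set"
  assumes cl: "closed M" and ne: "M \<noteq> {}"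
    and mid: "\<And>a b. a \<in> M \<Longrightarrow> b \<in> M \<Longrightarrow> (1/2) *\<^sub>R (a + b) \<in> M"
  shows "\<exists>m\<in>M. \<forall>m'\<in>M. norm (v - m) \<le> norm (v - m')"
proof -
  define d where "d = infdist v M"
  have d0: "0 \<le> d" unfolding d_def by (rule infdist_nonneg)
  define e :: "nat \<Rightarrow> real" where "e n = inverse (real (Suc n))" for n
  have e0: "0 < e n" for n unfolding e_def by simp
  have "\<forall>n. \<exists>m\<in>M. dist v m < d + e n" using infdist_approx[OF ne e0] unfolding d_def by blast
  then obtain s where sM: "\<And>n. s n \<in> M" and sd: "\<And>n. norm (v - s n) < d + e n"
    by (metis dist_norm)
  have dle: "d \<le> norm (v - m)" if "m \<in> M" for m
    unfolding d_def using infdist_le[OF that, of v] by (simp add: dist_norm)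
  have key: "(norm (s n - s k))^2 \<le> 4 * ((d + e N)^2 - d^2)" if "N \<le> n" "N \<le> k" for N n k
  proof -
    have en: "e n \<le> e N" and ek: "e k \<le> e N" using that unfolding e_def by (auto intro: le_imp_inverse_le)
    have "norm (v - s n) \<le> d + e N" using sd[of n] en by linarith
    then have a1: "(norm (v - s n))^2 \<le> (d + e N)^2" by (rule power_mono) simp
    have "norm (v - s k) \<le> d + e N" using sd[of k] ek by linarith
    then have a2: "(norm (v - s k))^2 \<le> (d + e N)^2" by (rule power_mono) simp
    have "d \<le> norm (v - (1/2) *\<^sub>R (s n + s k))" by (rule dle[OF mid[OF sM sM]])
    then have a3: "d^2 \<le> (norm (v - (1/2) *\<^sub>R (s n + s k)))^2" by (rule power_mono[OF _ d0])
    show ?thesis by (rule aux_lin[OF parallelogram_mid a1 a2 a3])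
  qed
  have "Cauchy s"
  proof (rule metric_CauchyI)
    fix \<epsilon> :: real assume \<epsilon>: "0 < \<epsilon>"
    define \<delta> where "\<delta> = min 1 (\<epsilon>^2 / (4 * (2 * d + 1) + 1))"
    have \<delta>0: "0 < \<delta>" unfolding \<delta>_def using \<epsilon> d0 by simp
    obtain N where N: "inverse (real (Suc N)) < \<delta>" using reals_Archimedean[OF \<delta>0] by blast
    have eN: "e N < \<delta>" "0 < e N" using N e0 unfolding e_def by auto
    have "4 * ((d + e N)^2 - d^2) = 4 * e N * (2 * d + e N)" by (simp add: power2_eq_square algebra_simps)
    also have "\<dots> \<le> 4 * \<delta> * (2 * d + 1)"
      using eN d0 \<delta>_def by (intro mult_mono) auto
    also have "\<dots> < \<epsilon>^2"
    proof -
      have "\<delta> \<le> \<epsilon>^2 / (4 * (2 * d + 1) + 1)" unfolding \<delta>_def by simp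
      then have "\<delta> * (4 * (2 * d + 1) + 1) \<le> \<epsilon>^2" using d0 by (simp add: pos_le_divide_eq)
      then show ?thesis using \<delta>0 by (simp add: algebra_simps)
    qed
    finally have b: "4 * ((d + e N)^2 - d^2) < \<epsilon>^2" .
    show "\<exists>N. \<forall>m\<ge>N. \<forall>n\<ge>N. dist (s m) (s n) < \<epsilon>"
    proof (intro exI allI impI)
      fix m n assume "N \<le> m" "N \<le> n"
      then have "(norm (s m - s n))^2 < \<epsilon>^2" using key[of N m n] b by linarith
      then have "norm (s m - s n) < \<epsilon>" using \<epsilon> by (simp add: power_less_imp_less_base)
      then show "dist (s m) (s n) < \<epsilon>" by (simp add: dist_norm)
    qed
  qed
  then obtain m where sm: "s \<longlonglongrightarrow> m" using Cauchy_convergent convergent_def by blast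
  have mM: "m \<in> M" by (rule closed_sequentially[OF cl sM sm])
  have "(\<lambda>n. norm (v - s n)) \<longlonglongrightarrow> norm (v - m)" by (intro tendsto_intros sm)
  moreover have "(\<lambda>n. d + e n) \<longlonglongrightarrow> d + 0" unfolding e_def by (intro tendsto_intros LIMSEQ_inverse_real_of_nat)
  ultimately have "norm (v - m) \<le> d + 0" using sd by (intro LIMSEQ_le[of "\<lambda>n. norm (v - s n)" _ "\<lambda>n. d + e n"]) (auto intro: less_imp_le)
  then show ?thesis using mM dle by force
qed

lemma cmod_sq_aux: "cmod c * cmod c = Re c * Re c + Im c * Im c"
  by (metis cmod_power2 power2_eq_square)

lemma aux2: "2 * (x::real) \<le> y \<Longrightarrow> y \<le> 1 * x \<Longrightarrow> x \<le> 0"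
  by linarith

lemma orth_of_closest:
  fixes w u :: "'a::complex_inner"
  assumes min: "\<And>t. norm w \<le> norm (w - scaleC t u)"
  shows "cinner w u = 0"
proof -
  define c where "c = cinner w u"
  define \<epsilon> where "\<epsilon> = inverse ((norm u)^2 + 1)"
  have \<epsilon>0: "0 < \<epsilon>" unfolding \<epsilon>_def by (intro positive_imp_inverse_positive add_nonneg_pos) auto
  have pp: "0 < 1 + (norm u)^2" by (intro add_pos_nonneg) auto
  have \<epsilon>u: "\<epsilon> * (norm u)^2 < 1" unfolding \<epsilon>_def using pp by (simp add: field_simps)
  define t where "t = complex_of_real \<epsilon> * c"
  have "(norm w)^2 \<le> (norm (w - scaleC t u))^2" using min[of t] by (simp add: power_mono)
  also have "\<dots> = (norm w)^2 - 2 * Re (cinner w (scaleC t u)) + (norm (scaleC t u))^2" by (rule norm_diff_sq)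
  also have "Re (cinner w (scaleC t u)) = \<epsilon> * (cmod c)^2"
    by (simp add: cinner_scaleC_right t_def c_def[symmetric] mult.assoc complex_mult_cnj cmod_sq_aux
        power2_eq_square flip: of_real_mult)
  also have "(norm (scaleC t u))^2 = \<epsilon>^2 * (cmod c)^2 * (norm u)^2"
    by (simp add: norm_scaleC t_def norm_mult power_mult_distrib abs_of_pos[OF \<epsilon>0])
  finally have "2 * \<epsilon> * (cmod c)^2 \<le> \<epsilon> * ((\<epsilon> * (norm u)^2) * (cmod c)^2)"
    by (simp add: power2_eq_square algebra_simps)
  then have "2 * (cmod c)^2 \<le> (\<epsilon> * (norm u)^2) * (cmod c)^2"
    using \<epsilon>0 by (simp add: mult.assoc)
  moreover have "(\<epsilon> * (norm u)^2) * (cmod c)^2 \<le> 1 * (cmod c)^2"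
    using \<epsilon>u by (intro mult_right_mono) auto
  ultimately have "(cmod c)^2 \<le> 0" by (rule aux2)
  then show ?thesis unfolding c_def by simp
qed

lemma closure_range_mid:
  fixes f :: "'a::real_normed_vector \<Rightarrow> 'b::real_normed_vector"
  assumes f: "linear f" and a: "a \<in> closure (range f)" and b: "b \<in> closure (range f)"
  shows "(1/2) *\<^sub>R (a + b) \<in> closure (range f)"
proof -
  from a obtain s where s1: "\<forall>n. s n \<in> range f" and s2: "s \<longlonglongrightarrow> a"
    unfolding closure_sequential by (elim exE conjE)
  from b obtain t where t1: "\<forall>n. t n \<in> range f" and t2: "t \<longlonglongrightarrow> b"
    unfolding closure_sequential by (elim exE conjE)
  have r: "\<forall>n. (1/2) *\<^sub>R (s n + t n) \<in> range f"
  proof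
    fix n
    have sn: "s n \<in> range f" using s1 by simp
    then obtain p where p: "s n = f p" by blast
    have tn: "t n \<in> range f" using t1 by simp
    then obtain q where q: "t n = f q" by blast
    have "(1/2) *\<^sub>R (s n + t n) = f ((1/2) *\<^sub>R (p + q))"
      by (simp add: p q linear_add[OF f] linear_cmul[OF f])
    then show "(1/2) *\<^sub>R (s n + t n) \<in> range f" by (rule image_eqI) (rule UNIV_I)
  qed
  have l: "(\<lambda>n. (1/2) *\<^sub>R (s n + t n)) \<longlonglongrightarrow> (1/2) *\<^sub>R (a + b)" by (intro tendsto_intros s2 t2)
  show ?thesis unfolding closure_sequential
  proof (intro exI conjI)
    show "\<forall>n. (1/2) *\<^sub>R (s n + t n) \<in> range f" by (rule r)
    show "(\<lambda>n. (1/2) *\<^sub>R (s n + t n)) \<longlonglongrightarrow> (1/2) *\<^sub>R (a + b)" by (rule l)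
  qed
qed

lemma closure_range_shift:
  fixes f :: "'a::real_normed_vector \<Rightarrow> 'b::real_normed_vector"
  assumes f: "linear f" and a: "a \<in> closure (range f)"
  shows "a + f z \<in> closure (range f)"
proof -
  from a obtain s where s1: "\<forall>n. s n \<in> range f" and s2: "s \<longlonglongrightarrow> a"
    unfolding closure_sequential by (elim exE conjE)
  have r: "\<forall>n. s n + f z \<in> range f"
  proof
    fix n
    have sn: "s n \<in> range f" using s1 by simp
    then obtain p where p: "s n = f p" by blast
    have "s n + f z = f (p + z)" by (simp add: p linear_add[OF f])
    then show "s n + f z \<in> range f" by (rule image_eqI) (rule UNIV_I)
  qed
  have l: "(\<lambda>n. s n + f z) \<longlonglongrightarrow> a + f z" by (intro tendsto_intros s2)
  show ?thesis unfolding closure_sequential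
  proof (intro exI conjI)
    show "\<forall>n. s n + f z \<in> range f" by (rule r)
    show "(\<lambda>n. s n + f z) \<longlonglongrightarrow> a + f z" by (rule l)
  qed
qed

lemma dense_range:
  fixes R :: "'a::chilbert_space \<Rightarrow> 'a"
  assumes cb: "cbounded_linear R" and sa: "selfadjoint_bdd R" and inj: "\<And>x. R x = 0 \<Longrightarrow> x = 0"
  shows "closure (range R) = UNIV"
proof (rule ccontr)
  assume "closure (range R) \<noteq> UNIV"
  then obtain v where v: "v \<notin> closure (range R)" by blast
  have lin: "linear R" using cbounded_imp_bounded_linear[OF cb] bounded_linear.linear by blast
  have Rsc: "R (scaleC c x) = scaleC c (R x)" for c x using cb unfolding cbounded_linear_def by blast
  have ne: "closure (range R) \<noteq> {}" by auto
  obtain m where mM: "m \<in> closure (range R)" and mmin: "\<And>m'. m' \<in> closure (range R) \<Longrightarrow> norm (v - m) \<le> norm (v - m')"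
    using closest_point[OF closed_closure ne closure_range_mid[OF lin]] by blast
  define w where "w = v - m"
  have orth: "cinner w (R y) = 0" for y
  proof (rule orth_of_closest)
    fix t
    have "m + R (scaleC t y) \<in> closure (range R)" by (rule closure_range_shift[OF lin mM])
    then have "norm (v - m) \<le> norm (v - (m + R (scaleC t y)))" by (rule mmin)
    then show "norm w \<le> norm (w - scaleC t (R y))" unfolding w_def by (simp add: Rsc algebra_simps)
  qed
  have "cinner (R w) (R w) = 0" using orth[of "R w"] sa unfolding selfadjoint_bdd_def by simp
  then have "R w = 0" using cinner_eq_zero_iff by blast
  then have "w = 0" by (rule inj)
  then show False using v mM unfolding w_def by simp
qed


theorem lemma5p5:
  fixes g :: "'a::chilbert_space \<Rightarrow> 'a" and S :: "('a \<times> 'a) set"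
  assumes "bounded_metric_op g"
    and "linear_op S" and "closed_op S" and "densely_defined S"
  defines "K \<equiv> {(\<xi>, \<eta>). \<xi> \<in> op_sqrt g ` Domain S \<and>
              (\<xi>, \<eta>) \<in> op_comp (graph (op_sqrt g)) (op_comp S (op_inv (graph (op_sqrt g))))}"
  shows "densely_defined K \<and>
         adjoint_op K = op_comp (op_inv (graph (op_sqrt g))) (op_comp (adjoint_op S) (graph (op_sqrt g)))"
proof -
  define R where "R = op_sqrt g"
  have cbg: "cbounded_linear g" and sag: "selfadjoint_bdd g"
    and posg: "\<And>x. x \<noteq> 0 \<Longrightarrow> 0 < Re (cinner (g x) x)"
    using assms(1) unfolding bounded_metric_op_def by auto
  have g0: "g 0 = 0"
  proof -
    have "g (0 + 0) = g 0 + g 0" using cbg unfolding cbounded_linear_def by blast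
    then show ?thesis by simp
  qed
  have pg: "posop g"
    unfolding posop_def
  proof (intro conjI allI)
    fix x y c
    show "g (x + y) = g x + g y" "g (scaleC c x) = scaleC c (g x)"
      using cbg unfolding cbounded_linear_def by blast+
    show "cinner (g x) y = cinner x (g y)" using sag unfolding selfadjoint_bdd_def by blast
    show "0 \<le> Re (cinner (g x) x)"
      using posg[of x] g0 by (cases "x = 0") auto
  qed
  have SP: "sqrt_prop g R" unfolding R_def by (rule sqrt_exists_unique[OF pg cbg])
  have cbR: "cbounded_linear R" and saR: "selfadjoint_bdd R" and RR: "\<And>x. R (R x) = g x"
    using SP unfolding sqrt_prop_def by (auto simp: fun_eq_iff)
  have saR': "\<And>x y. cinner (R x) y = cinner x (R y)" using saR unfolding selfadjoint_bdd_def by blast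
  have blR: "bounded_linear R" by (rule cbounded_imp_bounded_linear[OF cbR])
  have R0: "R 0 = 0" using linear_0[OF bounded_linear.linear[OF blR]] .
  have inj: "x = 0" if "R x = 0" for x
  proof (rule ccontr)
    assume "x \<noteq> 0"
    then have "0 < Re (cinner (g x) x)" by (rule posg)
    moreover have "g x = 0" using RR[of x] that R0 by simp
    ultimately show False by simp
  qed
  have Kchar: "(\<xi>, \<eta>) \<in> K \<longleftrightarrow> (\<exists>y z. (y, z) \<in> S \<and> \<xi> = R y \<and> \<eta> = R z)" for \<xi> \<eta>
    unfolding K_def R_def[symmetric] op_comp_def op_inv_def graph_def by auto
  have domK: "Domain K = R ` Domain S"
    using Kchar by (auto simp: Domain_iff image_iff) blast+
  have dense: "closure (R ` Domain S) = UNIV"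
  proof -
    have cont: "continuous_on (closure (Domain S)) R"
      by (intro linear_continuous_on blR)
    have "R ` closure (Domain S) \<subseteq> closure (R ` Domain S)"
      by (rule image_closure_subset[OF cont closed_closure closure_subset])
    then have "range R \<subseteq> closure (R ` Domain S)"
      using assms(4) unfolding densely_defined_def by simp
    then have "closure (range R) \<subseteq> closure (R ` Domain S)"
      by (metis closure_closure closure_mono)
    then show ?thesis using dense_range[OF cbR saR inj] by auto
  qed
  have adj: "adjoint_op K = op_comp (op_inv (graph R)) (op_comp (adjoint_op S) (graph R))"
  proof (rule set_eqI, clarify)
    fix \<eta> \<zeta>
    have "(\<eta>, \<zeta>) \<in> adjoint_op K \<longleftrightarrow> (\<forall>y z. (y, z) \<in> S \<longrightarrow> cinner (R z) \<eta> = cinner (R y) \<zeta>)"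
      unfolding adjoint_op_def by (simp add: Kchar) blast
    also have "\<dots> \<longleftrightarrow> (\<forall>y z. (y, z) \<in> S \<longrightarrow> cinner z (R \<eta>) = cinner y (R \<zeta>))"
      by (simp add: saR')
    also have "\<dots> \<longleftrightarrow> (R \<eta>, R \<zeta>) \<in> adjoint_op S"
      unfolding adjoint_op_def by auto
    also have "\<dots> \<longleftrightarrow> (\<eta>, \<zeta>) \<in> op_comp (op_inv (graph R)) (op_comp (adjoint_op S) (graph R))"
      unfolding op_comp_def op_inv_def graph_def by auto
    finally show "(\<eta>, \<zeta>) \<in> adjoint_op K \<longleftrightarrow> (\<eta>, \<zeta>) \<in> op_comp (op_inv (graph R)) (op_comp (adjoint_op S) (graph R))" .
  qed
  have "densely_defined K" unfolding densely_defined_def domK dense ..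
  then show ?thesis using adj unfolding R_def by simp
qed


end
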